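(* Let $\Theta=(\alpha,\rho_r,\rho_d,\rho_s,\rho_0,T)$ with $\alpha>1$, $\rho_r,\rho_d,\rho_s,\rho_0>0$, $T>0$, and let $K_{max}(\Theta)=\min\big(\frac T4,\frac{\rho_r}{3\rho_0},\frac{3\rho_d}{2\rho_0}\big)$. Suppose (C.1) $\min\big(\frac T4,\frac{\rho_r}{3\rho_0},\frac{3\rho_d}{2\rho_0}\big)>10$ and (C.2) $\rho_s/\alpha>1/2$. Then $K_{max}(\Theta)>10$, and for all $K$ with $1\le K\le K_{max}(\Theta)$ and every $M>0$, $$M\Big(2K\rho_0+\frac{4K^2\rho_0}{T}\Big)+\frac{8K^3\rho_0}{3T}\le M\rho_r+K\rho_d.$$ *)

theory Defs
  imports Complex_Main
begin

definition K_max :: "real \<Rightarrow> real \<Rightarrow> real \<Rightarrow> real \<Rightarrow> real \<Rightarrow> real \<Rightarrow> real" where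
  "K_max \<alpha> \<rho>r \<rho>d \<rho>s \<rho>0 T = min (T / 4) (min (\<rho>r / (3 * \<rho>0)) (3 * \<rho>d / (2 * \<rho>0)))"

end

theory Submission
  imports Defs
begin

theorem lemma2:
  fixes \<alpha> \<rho>r \<rho>d \<rho>s \<rho>0 T :: real
  assumes "\<alpha> > 1" and "\<rho>r > 0" and "\<rho>d > 0" and "\<rho>s > 0" and "\<rho>0 > 0" and "T > 0"
    and C1: "min (T / 4) (min (\<rho>r / (3 * \<rho>0)) (3 * \<rho>d / (2 * \<rho>0))) > 10"
    and C2: "\<rho>s / \<alpha> > 1 / 2"
  shows "K_max \<alpha> \<rho>r \<rho>d \<rho>s \<rho>0 T > 10 \<and>
         (\<forall>K M :: real. 1 \<le> K \<and> K \<le> K_max \<alpha> \<rho>r \<rho>d \<rho>s \<rho>0 T \<and> M > 0 \<longrightarrow>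
            M * (2 * K * \<rho>0 + 4 * K^2 * \<rho>0 / T) + 8 * K^3 * \<rho>0 / (3 * T)
              \<le> M * \<rho>r + K * \<rho>d)"
proof -
  have km: "K_max \<alpha> \<rho>r \<rho>d \<rho>s \<rho>0 T > 10" using C1 by (simp add: K_max_def)
  moreover have "\<forall>K M :: real. 1 \<le> K \<and> K \<le> K_max \<alpha> \<rho>r \<rho>d \<rho>s \<rho>0 T \<and> M > 0 \<longrightarrow>
            M * (2 * K * \<rho>0 + 4 * K^2 * \<rho>0 / T) + 8 * K^3 * \<rho>0 / (3 * T)
              \<le> M * \<rho>r + K * \<rho>d"
  proof (intro allI impI)
    fix K M :: real
    assume h: "1 \<le> K \<and> K \<le> K_max \<alpha> \<rho>r \<rho>d \<rho>s \<rho>0 T \<and> M > 0"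
    have p0: "\<rho>0 > 0" "T > 0" using assms by auto
    have K1: "K \<ge> 1" and M0: "M > 0" using h by auto
    have a: "K \<le> T/4" using h by (simp add: K_max_def)
    have b: "K \<le> \<rho>r / (3*\<rho>0)" using h by (simp add: K_max_def)
    have c: "K \<le> 3*\<rho>d / (2*\<rho>0)" using h by (simp add: K_max_def)
    have a': "4*K \<le> T" using a by simp
    have b': "3*K*\<rho>0 \<le> \<rho>r" using b p0 by (simp add: field_simps)
    have c': "2*K*\<rho>0 \<le> 3*\<rho>d" using c p0 by (simp add: field_simps)
    have h1: "4 * K^2 * \<rho>0 / T \<le> K*\<rho>0"
    proof -
      have "4 * K^2 * \<rho>0 = (4*K) * (K*\<rho>0)" by (simp add: power2_eq_square)
      also have "\<dots> \<le> T * (K*\<rho>0)" using a' K1 p0 by (intro mult_right_mono) auto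
      finally show ?thesis using p0 by (simp add: field_simps)
    qed
    have h2: "8 * K^3 * \<rho>0 / (3 * T) \<le> 2/3 * K^2 * \<rho>0"
    proof -
      have "8 * K^3 * \<rho>0 = 2 * (4*K) * (K^2*\<rho>0)" by (simp add: power2_eq_square power3_eq_cube)
      also have "\<dots> \<le> 2 * T * (K^2*\<rho>0)" using a' K1 p0 by (intro mult_right_mono) auto
      finally show ?thesis using p0 by (simp add: field_simps)
    qed
    have h3: "2/3 * K^2 * \<rho>0 \<le> K * \<rho>d"
    proof -
      have "2/3 * K^2 * \<rho>0 = K * (2*K*\<rho>0) / 3" by (simp add: power2_eq_square)
      also have "\<dots> \<le> K * (3*\<rho>d) / 3" using c' K1 by (intro divide_right_mono mult_left_mono) auto
      finally show ?thesis by simp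
    qed
    have h4: "M * (2 * K * \<rho>0 + 4 * K^2 * \<rho>0 / T) \<le> M * \<rho>r"
      using h1 b' M0 by (intro mult_left_mono) auto
    show "M * (2 * K * \<rho>0 + 4 * K^2 * \<rho>0 / T) + 8 * K^3 * \<rho>0 / (3 * T)
              \<le> M * \<rho>r + K * \<rho>d" using h2 h3 h4 by linarith
  qed
  ultimately show ?thesis by blast
qed

end
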